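(* Let $\mathsf{K}$ be a finite simplicial complex whose vertex set is a finite set $P\subset\mathbb{R}^d$, let $v\in\mathbb{R}^d$, and let $\zeta_1\prec_v\cdots\prec_v\zeta_s$ be the essential $p$-cycles of the filtration $\mathcal{D}_v(\mathsf{K})$ computed by the standard reduction algorithm. Let $\zeta$ be a $p$-cycle with $[\zeta]\neq 0$ in $H_p(\mathsf{K})$ such that $\zeta=\zeta_{i_1}+\cdots+\zeta_{i_m}+\partial c_{p+1}$ for some $(p+1)$-chain $c_{p+1}$ and indices $i_1<\cdots<i_m$ in $\{1,\dots,s\}$. Then $r_v([\zeta])=r_v(\zeta_{i_m})$, where $r_v([\zeta]):=\min_{\xi\in[\zeta]} r_v(\xi)$. In particular, $\zeta_{i_1}+\cdots+\zeta_{i_m}\in\arg\min_{\xi\in[\zeta]} r_v(\xi)$.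
   Context: All homology is with $\mathbb{Z}_2$ coefficients; chains are identified with their supports (sets of simplices). For a simplex $\sigma$ of $\mathsf{K}$ and $v\in\mathbb{R}^d$, $r_v(\sigma)=\max_{x\text{ vertex of }\sigma}\|v-x\|_2$; for a nonzero chain $\zeta$, $r_v(\zeta)=\max_{\sigma\in\zeta}r_v(\sigma)$. The order $\prec_v$ is a fixed total order on the simplices of $\mathsf{K}$ such that $\sigma_1\prec_v\sigma_2$ whenever $\sigma_1$ is a proper face of $\sigma_2$ or $r_v(\sigma_1)<r_v(\sigma_2)$ (remaining ties broken arbitrarily). For a nonzero chain $\zeta$, $\kappa(\zeta)$ is the $\prec_v$-largest simplex in its support, and chains are compared by $\zeta\prec_v\zeta'$ iff $\kappa(\zeta)\prec_v\kappa(\zeta')$; note $r_v(\zeta)=r_v(\kappa(\zeta))$. $\mathcal{D}_v(\mathsf{K})$ is the simplexwise filtration adding the simplices $\sigma_1\prec_v\sigma_2\prec_v\cdots\prec_v\sigma_N$ one at a time. Standard reduction: let $\partial$ be the $N\times N$ $\mathbb{Z}_2$ boundary matrix (column $j$ is the boundary of $\sigma_j$, rows and columns in filtration order), $low(j)$ the row index of the lowest $1$ in column $j$ (undefined if the column is zero). Start with $V=I_N$; for $j=1,\dots,N$, while there is $j_0<j$ with $low(j_0)=low(j)$, add column $j_0$ to column $j$ of $\partial$ and column $j_0$ of $V$ to column $j$ of $V$. Let $R$ be the resulting reduced matrix. An index $i$ is paired if $i=low(j)$ for some nonzero column $R_j$, or if $R_i\neq0$. The essential $p$-cycles are the columns $V_i$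 (viewed as chains) for indices $i$ such that $\sigma_i$ is a $p$-simplex, $R_i=0$, and $i$ is not paired; each such $V_i$ is a cycle with $\kappa(V_i)=\sigma_i$, and their classes form a basis of $H_p(\mathsf{K})$. *)

theory Defs
  imports "HOL-Analysis.Analysis" "HOL-Library.While_Combinator"
begin

definition finite_abstract_complex :: "'a set set \<Rightarrow> bool" where
  "finite_abstract_complex K \<longleftrightarrow> finite K \<and> (\<forall>\<sigma>\<in>K. finite \<sigma> \<and> \<sigma> \<noteq> {})
     \<and> (\<forall>\<sigma>\<in>K. \<forall>\<tau>. \<tau> \<subseteq> \<sigma> \<and> \<tau> \<noteq> {} \<longrightarrow> \<tau> \<in> K)"

definition rv_simplex :: "'a::real_normed_vector \<Rightarrow> 'a set \<Rightarrow> real" where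
  "rv_simplex v \<sigma> = Max ((\<lambda>x. norm (v - x)) ` \<sigma>)"

definition rv_chain :: "'a::real_normed_vector \<Rightarrow> 'a set set \<Rightarrow> real" where
  "rv_chain v \<zeta> = Max (rv_simplex v ` \<zeta>)"

(* Z2-chains are identified with their supports *)
definition chain_add :: "'b set \<Rightarrow> 'b set \<Rightarrow> 'b set" where
  "chain_add a b = (a - b) \<union> (b - a)"

definition chain_sum :: "('i \<Rightarrow> 'b set) \<Rightarrow> 'i set \<Rightarrow> 'b set" where
  "chain_sum f S = {\<sigma>. odd (card {i\<in>S. \<sigma> \<in> f i})}"

definition is_facet :: "'a set \<Rightarrow> 'a set \<Rightarrow> bool" where
  "is_facet \<tau> \<sigma> \<longleftrightarrow> \<tau> \<subseteq> \<sigma> \<and> card \<sigma> = card \<tau> + 1"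

definition chain_boundary :: "'a set set \<Rightarrow> 'a set set \<Rightarrow> 'a set set" where
  "chain_boundary K c = {\<tau>\<in>K. odd (card {\<sigma>\<in>c. is_facet \<tau> \<sigma>})}"

definition p_chain :: "'a set set \<Rightarrow> nat \<Rightarrow> 'a set set \<Rightarrow> bool" where
  "p_chain K p c \<longleftrightarrow> c \<subseteq> K \<and> (\<forall>\<sigma>\<in>c. card \<sigma> = p + 1)"

definition is_cycle :: "'a set set \<Rightarrow> nat \<Rightarrow> 'a set set \<Rightarrow> bool" where
  "is_cycle K p \<zeta> \<longleftrightarrow> p_chain K p \<zeta> \<and> chain_boundary K \<zeta> = {}"

definition null_homologous :: "'a set set \<Rightarrow> nat \<Rightarrow> 'a set set \<Rightarrow> bool" where
  "null_homologous K p \<zeta> \<longleftrightarrow> (\<exists>c. p_chain K (p + 1) c \<and> \<zeta> = chain_boundary K c)"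

definition homology_class :: "'a set set \<Rightarrow> nat \<Rightarrow> 'a set set \<Rightarrow> 'a set set set" where
  "homology_class K p \<zeta> =
     {\<xi>. p_chain K p \<xi> \<and> (\<exists>c. p_chain K (p + 1) c \<and> \<xi> = chain_add \<zeta> (chain_boundary K c))}"

definition rv_class :: "'a::real_normed_vector set set \<Rightarrow> nat \<Rightarrow> 'a \<Rightarrow> 'a set set \<Rightarrow> real" where
  "rv_class K p v \<zeta> = Min (rv_chain v ` homology_class K p \<zeta>)"

(* the order \<prec>_v, given as the list sigma_1,...,sigma_N (0-based indices) *)
definition filtration_order :: "'a::real_normed_vector set set \<Rightarrow> 'a \<Rightarrow> 'a set list \<Rightarrow> bool" where
  "filtration_order K v ord \<longleftrightarrow> distinct ord \<and> set ord = K \<and>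
     (\<forall>i<length ord. \<forall>j<length ord.
        (ord ! i \<subset> ord ! j \<or> rv_simplex v (ord ! i) < rv_simplex v (ord ! j)) \<longrightarrow> i < j)"

(* Z2 matrices: column j is the set of row indices carrying a 1 *)
definition boundary_matrix :: "'a set list \<Rightarrow> nat \<Rightarrow> nat set" where
  "boundary_matrix ord j =
     (if j < length ord then {i. i < length ord \<and> is_facet (ord ! i) (ord ! j)} else {})"

definition low :: "nat set \<Rightarrow> nat" where
  "low c = Max c"

definition red_cond :: "nat \<Rightarrow> (nat \<Rightarrow> nat set) \<times> (nat \<Rightarrow> nat set) \<Rightarrow> bool" where
  "red_cond j st \<longleftrightarrow> (let R = fst st in
     R j \<noteq> {} \<and> (\<exists>j0<j. R j0 \<noteq> {} \<and> low (R j0) = low (R j)))"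

definition red_step :: "nat \<Rightarrow> (nat \<Rightarrow> nat set) \<times> (nat \<Rightarrow> nat set) \<Rightarrow> (nat \<Rightarrow> nat set) \<times> (nat \<Rightarrow> nat set)" where
  "red_step j st = (let R = fst st; V = snd st;
     j0 = (SOME j0. j0 < j \<and> R j0 \<noteq> {} \<and> low (R j0) = low (R j))
   in (R(j := chain_add (R j) (R j0)), V(j := chain_add (V j) (V j0))))"

definition reduce_column :: "nat \<Rightarrow> (nat \<Rightarrow> nat set) \<times> (nat \<Rightarrow> nat set) \<Rightarrow> (nat \<Rightarrow> nat set) \<times> (nat \<Rightarrow> nat set)" where
  "reduce_column j st = the (while_option (red_cond j) (red_step j) st)"

definition standard_reduction :: "nat \<Rightarrow> (nat \<Rightarrow> nat set) \<Rightarrow> (nat \<Rightarrow> nat set) \<times> (nat \<Rightarrow> nat set)" where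
  "standard_reduction N D = foldl (\<lambda>st j. reduce_column j st) (D, \<lambda>j. {j}) [0..<N]"

definition reduced_R :: "'a set list \<Rightarrow> nat \<Rightarrow> nat set" where
  "reduced_R ord = fst (standard_reduction (length ord) (boundary_matrix ord))"

definition reduced_V :: "'a set list \<Rightarrow> nat \<Rightarrow> nat set" where
  "reduced_V ord = snd (standard_reduction (length ord) (boundary_matrix ord))"

definition paired :: "'a set list \<Rightarrow> nat \<Rightarrow> bool" where
  "paired ord i \<longleftrightarrow> (\<exists>j<length ord. reduced_R ord j \<noteq> {} \<and> low (reduced_R ord j) = i)
                      \<or> reduced_R ord i \<noteq> {}"

definition essential_indices :: "'a set list \<Rightarrow> nat \<Rightarrow> nat set" where
  "essential_indices ord p = {i. i < length ord \<and> card (ord ! i) = p + 1 \<and>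
                                 reduced_R ord i = {} \<and> \<not> paired ord i}"

definition essential_cycle :: "'a set list \<Rightarrow> nat \<Rightarrow> 'a set set" where
  "essential_cycle ord i = (\<lambda>k. ord ! k) ` reduced_V ord i"

end

theory Submission imports Defs begin

lemma cs_empty[simp]: "chain_sum f {} = {}"
  by (simp add: chain_sum_def)

lemma cs_subset: "chain_sum f S \<subseteq> \<Union>(f ` S)"
proof
  fix x assume "x \<in> chain_sum f S"
  then have "odd (card {i\<in>S. x \<in> f i})" by (simp add: chain_sum_def)
  then have "{i\<in>S. x \<in> f i} \<noteq> {}" by (metis card.empty even_zero)
  then show "x \<in> \<Union>(f ` S)" by blast
qed

lemma cs_insert:
  assumes "finite S" "x \<notin> S"
  shows "chain_sum f (insert x S) = chain_add (f x) (chain_sum f S)"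
proof -
  have "card {i\<in>insert x S. s \<in> f i} = (if s \<in> f x then Suc (card {i\<in>S. s \<in> f i}) else card {i\<in>S. s \<in> f i})" for s
  proof (cases "s \<in> f x")
    case True
    then have "{i\<in>insert x S. s \<in> f i} = insert x {i\<in>S. s \<in> f i}" by auto
    then show ?thesis using True assms by simp
  next
    case False
    then have "{i\<in>insert x S. s \<in> f i} = {i\<in>S. s \<in> f i}" by auto
    then show ?thesis using False by simp
  qed
  then show ?thesis by (auto simp: chain_sum_def chain_add_def)
qed

lemma cs_add:
  assumes "finite A" "finite B"
  shows "chain_sum f (chain_add A B) = chain_add (chain_sum f A) (chain_sum f B)"
proof -
  have "odd (card {i\<in>chain_add A B. s \<in> f i}) \<longleftrightarrow>
        (odd (card {i\<in>A. s \<in> f i}) \<noteq> odd (card {i\<in>B. s \<in> f i}))" for s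
  proof -
    let ?P = "\<lambda>i. s \<in> f i"
    have e1: "{i\<in>A. ?P i} = {i\<in>A-B. ?P i} \<union> {i\<in>A\<inter>B. ?P i}" by auto
    have e2: "{i\<in>B. ?P i} = {i\<in>B-A. ?P i} \<union> {i\<in>A\<inter>B. ?P i}" by auto
    have e3: "{i\<in>chain_add A B. ?P i} = {i\<in>A-B. ?P i} \<union> {i\<in>B-A. ?P i}" by (auto simp: chain_add_def)
    have c1: "card {i\<in>A. ?P i} = card {i\<in>A-B. ?P i} + card {i\<in>A\<inter>B. ?P i}"
      unfolding e1 by (rule card_Un_disjoint) (use assms in auto)
    have c2: "card {i\<in>B. ?P i} = card {i\<in>B-A. ?P i} + card {i\<in>A\<inter>B. ?P i}"
      unfolding e2 by (rule card_Un_disjoint) (use assms in auto)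
    have c3: "card {i\<in>chain_add A B. ?P i} = card {i\<in>A-B. ?P i} + card {i\<in>B-A. ?P i}"
      unfolding e3 by (rule card_Un_disjoint) (use assms in auto)
    show ?thesis unfolding c1 c2 c3 by auto
  qed
  then show ?thesis by (auto simp: chain_sum_def chain_add_def)
qed

lemma cs_single[simp]: "chain_sum f {x} = f x"
  using cs_insert[of "{}" x f] by (simp add: chain_add_def)

lemma cs_compose:
  assumes "finite J" "\<And>j. finite (V j)"
  shows "chain_sum D (chain_sum V J) = chain_sum (\<lambda>j. chain_sum D (V j)) J"
  using assms(1)
proof (induction J rule: finite_induct)
  case empty then show ?case by simp
next
  case (insert x F)
  have fin: "finite (chain_sum V F)"
    by (rule finite_subset[OF cs_subset]) (use insert assms(2) in auto)
  show ?case using insert fin assms(2) by (simp add: cs_insert cs_add)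
qed

definition inv :: "(nat\<Rightarrow>nat set) \<Rightarrow> nat \<Rightarrow> (nat \<Rightarrow> nat set) \<times> (nat \<Rightarrow> nat set) \<Rightarrow> bool" where
 "inv D n st \<longleftrightarrow> (\<forall>i. finite (fst st i)) \<and> (\<forall>i. i \<in> snd st i \<and> snd st i \<subseteq> {..i})
    \<and> (\<forall>i. fst st i = chain_sum D (snd st i))
    \<and> (\<forall>a b. a < b \<and> b < n \<and> fst st a \<noteq> {} \<and> fst st b \<noteq> {} \<longrightarrow> low (fst st a) \<noteq> low (fst st b))"

lemma red_step_inv:
  assumes "inv D j st" "red_cond j st"
  shows "inv D j (red_step j st) \<and>
    (if fst (red_step j st) j = {} then 0 else Suc (low (fst (red_step j st) j)))
      < (if fst st j = {} then 0 else Suc (low (fst st j)))"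
proof -
  obtain R V where st: "st = (R, V)" by fastforce
  define j0 where "j0 = (SOME j0. j0 < j \<and> R j0 \<noteq> {} \<and> low (R j0) = low (R j))"
  have ex: "\<exists>j0<j. R j0 \<noteq> {} \<and> low (R j0) = low (R j)" and Rj: "R j \<noteq> {}"
    using assms(2) st by (auto simp: red_cond_def)
  have j0: "j0 < j" "R j0 \<noteq> {}" "low (R j0) = low (R j)"
    using someI_ex[OF ex] unfolding j0_def by auto
  have rs: "red_step j st = (R(j := chain_add (R j) (R j0)), V(j := chain_add (V j) (V j0)))"
    using st j0_def by (simp add: red_step_def Let_def)
  have iv: "(\<forall>i. finite (R i)) \<and> (\<forall>i. i \<in> V i \<and> V i \<subseteq> {..i})
    \<and> (\<forall>i. R i = chain_sum D (V i))
    \<and> (\<forall>a b. a < b \<and> b < j \<and> R a \<noteq> {} \<and> R b \<noteq> {} \<longrightarrow> low (R a) \<noteq> low (R b))"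
    using assms(1) unfolding st inv_def fst_conv snd_conv .
  have fin: "\<And>i. finite (R i)" and Vi: "\<And>i. i \<in> V i \<and> V i \<subseteq> {..i}"
    and RV: "\<And>i. R i = chain_sum D (V i)"
    and dis: "\<And>a b. a < b \<Longrightarrow> b < j \<Longrightarrow> R a \<noteq> {} \<Longrightarrow> R b \<noteq> {} \<Longrightarrow> low (R a) \<noteq> low (R b)"
    using conjunct1[OF iv] conjunct1[OF conjunct2[OF iv]] conjunct1[OF conjunct2[OF conjunct2[OF iv]]]
      conjunct2[OF conjunct2[OF conjunct2[OF iv]]] by (blast, blast, blast, blast)
  have finV: "finite (V i)" for i using Vi[of i] finite_subset by blast
  have "j \<notin> V j0" using Vi[of j0] j0(1) by auto
  then have V1: "j \<in> chain_add (V j) (V j0) \<and> chain_add (V j) (V j0) \<subseteq> {..j}"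
    using Vi[of j] Vi[of j0] j0(1) by (auto simp: chain_add_def)
  have R1: "chain_add (R j) (R j0) = chain_sum D (chain_add (V j) (V j0))"
    using RV finV by (simp add: cs_add)
  have I: "inv D j (red_step j st)"
    unfolding rs inv_def fst_conv snd_conv
  proof (intro conjI allI impI)
    fix i show "finite ((R(j := chain_add (R j) (R j0))) i)" using fin by (simp add: chain_add_def)
    show "i \<in> (V(j := chain_add (V j) (V j0))) i" using V1 Vi by simp
    show "(V(j := chain_add (V j) (V j0))) i \<subseteq> {..i}" using V1 Vi by simp
    show "(R(j := chain_add (R j) (R j0))) i = chain_sum D ((V(j := chain_add (V j) (V j0))) i)"
      using R1 RV by simp
  next
    fix a b assume "a < b \<and> b < j \<and> (R(j := chain_add (R j) (R j0))) a \<noteq> {} \<and> (R(j := chain_add (R j) (R j0))) b \<noteq> {}"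
    then show "low ((R(j := chain_add (R j) (R j0))) a) \<noteq> low ((R(j := chain_add (R j) (R j0))) b)"
    proof -
      from \<open>a < b \<and> b < j \<and> _\<close> have h: "a < b" "b < j" "a \<noteq> j" "b \<noteq> j" "R a \<noteq> {}" "R b \<noteq> {}" by auto
      show ?thesis using dis[OF h(1,2,5,6)] h(3,4) by simp
    qed
  qed
  let ?l = "low (R j)"
  have ml: "?l \<in> R j" "?l \<in> R j0" "\<forall>x\<in>R j. x \<le> ?l" "\<forall>x\<in>R j0. x \<le> ?l"
    using fin[of j] fin[of j0] Rj j0 Max_in[of "R j"] Max_in[of "R j0"] Max_ge[of "R j"] Max_ge[of "R j0"]
    by (auto simp: low_def)
  have sub: "chain_add (R j) (R j0) \<subseteq> {..<?l}"
    using ml by (auto simp: chain_add_def order.order_iff_strict)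
  have fa: "finite (chain_add (R j) (R j0))" using fin by (simp add: chain_add_def)
  have "chain_add (R j) (R j0) = {} \<or> low (chain_add (R j) (R j0)) < ?l"
  proof (cases "chain_add (R j) (R j0) = {}")
    case False
    then have "Max (chain_add (R j) (R j0)) \<in> chain_add (R j) (R j0)" using Max_in fa by blast
    then show ?thesis using sub by (auto simp: low_def)
  qed simp
  then show ?thesis using I rs Rj unfolding st by auto
qed

lemma reduce_column_inv:
  assumes "inv D j st"
  shows "inv D (Suc j) (reduce_column j st)"
proof -
  have "\<exists>t. while_option (red_cond j) (red_step j) st = Some t"
    apply (rule measure_while_option_Some[where P="inv D j" and f="\<lambda>st. if fst st j = {} then 0 else Suc (low (fst st j))"])
    using red_step_inv assms by auto
  then obtain t where t: "while_option (red_cond j) (red_step j) st = Some t" by blast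
  have it: "inv D j t"
    by (rule while_option_rule[OF _ t]) (use red_step_inv assms in auto)
  have nc: "\<not> red_cond j t" using while_option_stop[OF t] .
  have "inv D (Suc j) t"
    using it nc unfolding inv_def red_cond_def Let_def
    by (metis less_SucE)
  then show ?thesis using t by (simp add: reduce_column_def)
qed

lemma std_red_inv:
  assumes "\<And>i. finite (D i)"
  shows "inv D n (standard_reduction n D)"
proof (induction n)
  case 0
  show ?case using assms by (simp add: standard_reduction_def inv_def)
next
  case (Suc n)
  then show ?case
    by (simp add: standard_reduction_def reduce_column_inv)
qed


lemma expansion:
  fixes V :: "nat \<Rightarrow> nat set" and n :: nat
  assumes "\<And>i. i \<in> V i \<and> V i \<subseteq> {..i}"
  shows "c \<subseteq> {..<n} \<Longrightarrow> \<exists>J. J \<subseteq> {..<n} \<and> chain_sum V J = c"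
proof (induction n arbitrary: c)
  case 0 then show ?case by (intro exI[of _ "{}"]) auto
next
  case (Suc n)
  show ?case
  proof (cases "n \<in> c")
    case False
    then have "c \<subseteq> {..<n}" using Suc.prems by (auto simp: less_Suc_eq)
    then obtain J where "J \<subseteq> {..<n}" "chain_sum V J = c" using Suc.IH by blast
    then show ?thesis by (intro exI[of _ J]) auto
  next
    case True
    have "chain_add c (V n) \<subseteq> {..<n}"
    proof
      fix x assume x: "x \<in> chain_add c (V n)"
      have "x < Suc n" "x \<noteq> n" using x Suc.prems True assms[of n] by (auto simp: chain_add_def)
      then show "x \<in> {..<n}" by simp
    qed
    then obtain J where J: "J \<subseteq> {..<n}" "chain_sum V J = chain_add c (V n)" using Suc.IH by blast
    have fJ: "finite J" using J(1) finite_subset by blast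
    have "n \<notin> J" using J(1) by auto
    then have "chain_sum V (insert n J) = chain_add (V n) (chain_add c (V n))"
      using cs_insert[OF fJ, of n V] J(2) by simp
    also have "\<dots> = c" by (auto simp: chain_add_def)
    finally show ?thesis using J(1) by (intro exI[of _ "insert n J"]) auto
  qed
qed

lemma pivot:
  assumes iv: "inv D N (R, V)" and J: "J \<subseteq> {..<N}"
    and m: "m \<in> chain_sum R J" and sub: "chain_sum R J \<subseteq> {..m}"
  shows "\<exists>j<N. R j \<noteq> {} \<and> low (R j) = m"
proof -
  have fin: "\<And>i. finite (R i)" and
    dis: "\<And>a b. a < b \<Longrightarrow> b < N \<Longrightarrow> R a \<noteq> {} \<Longrightarrow> R b \<noteq> {} \<Longrightarrow> low (R a) \<noteq> low (R b)"
  proof -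
    have iv': "(\<forall>i. finite (R i)) \<and> (\<forall>i. i \<in> V i \<and> V i \<subseteq> {..i})
    \<and> (\<forall>i. R i = chain_sum D (V i))
    \<and> (\<forall>a b. a < b \<and> b < N \<and> R a \<noteq> {} \<and> R b \<noteq> {} \<longrightarrow> low (R a) \<noteq> low (R b))"
      using iv unfolding inv_def fst_conv snd_conv .
    show "\<And>i. finite (R i)" using conjunct1[OF iv'] by simp
    show "\<And>a b. a < b \<Longrightarrow> b < N \<Longrightarrow> R a \<noteq> {} \<Longrightarrow> R b \<noteq> {} \<Longrightarrow> low (R a) \<noteq> low (R b)"
      using conjunct2[OF conjunct2[OF conjunct2[OF iv']]] by simp
  qed
  have dis2: "a < N \<Longrightarrow> b < N \<Longrightarrow> R a \<noteq> {} \<Longrightarrow> R b \<noteq> {} \<Longrightarrow> low (R a) = low (R b) \<Longrightarrow> a = b" for a b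
  proof (cases a b rule: linorder_cases)
  qed (use dis[of a b] dis[of b a] in auto)
  define J' where "J' = {j\<in>J. R j \<noteq> {}}"
  have eq: "chain_sum R J = chain_sum R J'"
  proof -
    have "{i\<in>J. x \<in> R i} = {i\<in>J'. x \<in> R i}" for x by (auto simp: J'_def)
    then show ?thesis unfolding chain_sum_def by simp
  qed
  have fJ': "finite J'" by (rule finite_subset[of J' "{..<N}"]) (use J in \<open>auto simp: J'_def\<close>)
  have "m \<in> chain_sum R J'" using m eq by simp
  then have "m \<in> \<Union>(R ` J')" using subsetD[OF cs_subset[of R J']] by blast
  then obtain j1 where j1: "j1 \<in> J'" "m \<in> R j1" by (rule UN_E)
  have lowge: "\<And>j x. x \<in> R j \<Longrightarrow> x \<le> low (R j)" using fin by (simp add: low_def)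
  define l where "l = Max ((\<lambda>j. low (R j)) ` J')"
  have "l \<in> (\<lambda>j. low (R j)) ` J'" unfolding l_def using fJ' j1(1) by (intro Max_in) auto
  then obtain js where js: "js \<in> J'" "low (R js) = l" by blast
  have lmax: "\<And>j. j \<in> J' \<Longrightarrow> low (R j) \<le> l" unfolding l_def using fJ' by auto
  have "R js \<noteq> {}" using js(1) by (simp add: J'_def)
  then have lin: "l \<in> R js" using js(2) fin[of js] Max_in by (auto simp: low_def)
  have "{j\<in>J'. l \<in> R j} = {js}"
  proof
    show "{js} \<subseteq> {j\<in>J'. l \<in> R j}" using js lin by auto
    show "{j\<in>J'. l \<in> R j} \<subseteq> {js}"
    proof
      fix j assume "j \<in> {j\<in>J'. l \<in> R j}"
      then have h: "j \<in> J'" "l \<in> R j" by auto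
      have "low (R j) = l" using lowge[OF h(2)] lmax[OF h(1)] by simp
      have a: "j \<in> J" "R j \<noteq> {}" using h(1) unfolding J'_def by simp_all
      have b: "js \<in> J" "R js \<noteq> {}" using js(1) unfolding J'_def by simp_all
      have "j < N" "js < N" using a(1) b(1) J by auto
      then have "j = js" using dis2[of j js] a(2) b(2) \<open>low (R j) = l\<close> js(2) by simp
      then show "j \<in> {js}" by simp
    qed
  qed
  then have "l \<in> chain_sum R J'" by (simp add: chain_sum_def)
  then have "l \<in> chain_sum R J" using eq by simp
  then have "l \<le> m" using sub by blast
  moreover have "m \<le> l" using lowge[OF j1(2)] lmax[OF j1(1)] by simp
  ultimately have "l = m" by simp
  moreover have "js < N" "R js \<noteq> {}" using js(1) J unfolding J'_def by auto
  ultimately show ?thesis using js(2) by blast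
qed

lemma cs_image:
  assumes "inj_on g U" "\<And>i. i \<in> S \<Longrightarrow> f i \<subseteq> U"
  shows "chain_sum (\<lambda>i. g ` f i) S = g ` chain_sum f S"
proof -
  have key: "k \<in> U \<Longrightarrow> {i\<in>S. g k \<in> g ` f i} = {i\<in>S. k \<in> f i}" for k
  proof -
    assume k: "k \<in> U"
    have "g k \<in> g ` f i \<longleftrightarrow> k \<in> f i" if "i \<in> S" for i
      by (rule inj_on_image_mem_iff[OF assms(1) k assms(2)[OF that]])
    then show ?thesis by auto
  qed
  show ?thesis
  proof
    show "chain_sum (\<lambda>i. g ` f i) S \<subseteq> g ` chain_sum f S"
    proof
      fix x assume x: "x \<in> chain_sum (\<lambda>i. g ` f i) S"
      have "x \<in> \<Union>((\<lambda>i. g ` f i) ` S)" using subsetD[OF cs_subset x] .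
      then obtain i where i: "i \<in> S" "x \<in> g ` f i" by (rule UN_E)
      from i(2) obtain k where k: "k \<in> f i" "x = g k" by blast
      have kU: "k \<in> U" using k(1) assms(2)[OF i(1)] by (rule subsetD[rotated])
      have "odd (card {i\<in>S. g k \<in> g ` f i})" using x k(2) by (simp add: chain_sum_def)
      then have "odd (card {i\<in>S. k \<in> f i})" using key[OF kU] by simp
      then have "k \<in> chain_sum f S" by (simp add: chain_sum_def)
      then show "x \<in> g ` chain_sum f S" using k(2) by (rule rev_image_eqI)
    qed
    show "g ` chain_sum f S \<subseteq> chain_sum (\<lambda>i. g ` f i) S"
    proof
      fix x assume "x \<in> g ` chain_sum f S"
      then obtain k where k: "k \<in> chain_sum f S" "x = g k" by (rule imageE)
      have "k \<in> \<Union>(f ` S)" using subsetD[OF cs_subset k(1)] .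
      then obtain i where i: "i \<in> S" "k \<in> f i" by (rule UN_E)
      have kU: "k \<in> U" using i(2) assms(2)[OF i(1)] by (rule subsetD[rotated])
      have "odd (card {i\<in>S. k \<in> f i})" using k(1) by (simp add: chain_sum_def)
      then have "odd (card {i\<in>S. g k \<in> g ` f i})" using key[OF kU] by simp
      then show "x \<in> chain_sum (\<lambda>i. g ` f i) S" using k(2) by (simp add: chain_sum_def)
    qed
  qed
qed

lemma bm_sub: "boundary_matrix ord j \<subseteq> {..<length ord}"
  by (auto simp: boundary_matrix_def)

lemma bd_image:
  assumes "C \<subseteq> {..<length ord}" "distinct ord"
  shows "chain_boundary (set ord) ((!) ord ` C) = (!) ord ` chain_sum (boundary_matrix ord) C"
proof -
  let ?N = "length ord" and ?o = "(!) ord"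
  have inj: "inj_on ?o {..<?N}" using assms(2) by (simp add: inj_on_nth)
  have key: "i < ?N \<Longrightarrow> card {\<sigma> \<in> ?o ` C. is_facet (?o i) \<sigma>} = card {j\<in>C. i \<in> boundary_matrix ord j}" for i
  proof -
    assume i: "i < ?N"
    have "{\<sigma> \<in> ?o ` C. is_facet (?o i) \<sigma>} = ?o ` {j\<in>C. is_facet (?o i) (?o j)}" by auto
    moreover have "card (?o ` {j\<in>C. is_facet (?o i) (?o j)}) = card {j\<in>C. is_facet (?o i) (?o j)}"
      by (rule card_image) (rule inj_on_subset[OF inj], use assms(1) in auto)
    moreover have "{j\<in>C. is_facet (?o i) (?o j)} = {j\<in>C. i \<in> boundary_matrix ord j}"
      using assms(1) i by (auto simp: boundary_matrix_def)
    ultimately show ?thesis by simp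
  qed
  have csub: "chain_sum (boundary_matrix ord) C \<subseteq> {..<?N}"
  proof -
    have "\<Union>(boundary_matrix ord ` C) \<subseteq> {..<?N}" using bm_sub by blast
    then show ?thesis using cs_subset by (rule order_trans[rotated])
  qed
  show ?thesis
  proof
    show "chain_boundary (set ord) (?o ` C) \<subseteq> ?o ` chain_sum (boundary_matrix ord) C"
    proof
      fix t assume t: "t \<in> chain_boundary (set ord) (?o ` C)"
      then have "t \<in> set ord" by (simp add: chain_boundary_def)
      then obtain i where i: "i < ?N" "t = ?o i" by (metis in_set_conv_nth)
      have "odd (card {\<sigma> \<in> ?o ` C. is_facet t \<sigma>})" using t by (simp add: chain_boundary_def)
      then have "odd (card {j\<in>C. i \<in> boundary_matrix ord j})" using key[OF i(1)] i(2) by simp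
      then have "i \<in> chain_sum (boundary_matrix ord) C" by (simp add: chain_sum_def)
      then show "t \<in> ?o ` chain_sum (boundary_matrix ord) C" using i(2) by (rule rev_image_eqI)
    qed
    show "?o ` chain_sum (boundary_matrix ord) C \<subseteq> chain_boundary (set ord) (?o ` C)"
    proof
      fix t assume "t \<in> ?o ` chain_sum (boundary_matrix ord) C"
      then obtain i where i: "i \<in> chain_sum (boundary_matrix ord) C" "t = ?o i" by blast
      have iN: "i < ?N" using i(1) csub by auto
      have "odd (card {j\<in>C. i \<in> boundary_matrix ord j})" using i(1) by (simp add: chain_sum_def)
      then have "odd (card {\<sigma> \<in> ?o ` C. is_facet t \<sigma>})" using key[OF iN] i(2) by simp
      moreover have "t \<in> set ord" using iN i(2) by simp
      ultimately show "t \<in> chain_boundary (set ord) (?o ` C)" by (simp add: chain_boundary_def)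
    qed
  qed
qed

lemma img_add:
  assumes "inj_on g U" "A \<subseteq> U" "B \<subseteq> U"
  shows "chain_add (g ` A) (g ` B) = g ` chain_add A B"
  unfolding chain_add_def image_Un
  using inj_on_image_set_diff[OF assms(1), of A B] inj_on_image_set_diff[OF assms(1), of B A] assms by auto


lemma rv_img:
  assumes fin: "finite X" and mX: "m \<in> X" and bound: "\<And>k. k \<in> X \<Longrightarrow> rv_simplex v (g k) \<le> rv_simplex v (g m)"
  shows "rv_chain v (g ` X) = rv_simplex v (g m)"
  unfolding rv_chain_def
proof (rule Max_eqI)
  show "finite (rv_simplex v ` g ` X)" using fin by simp
  show "\<And>y. y \<in> rv_simplex v ` g ` X \<Longrightarrow> y \<le> rv_simplex v (g m)" using bound by blast
  show "rv_simplex v (g m) \<in> rv_simplex v ` g ` X" using mX by blast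
qed

theorem mainTheorem1:
  fixes K :: "(real^'d) set set" and v :: "real^'d" and ord :: "(real^'d) set list"
    and p :: nat and \<zeta> c :: "(real^'d) set set" and S :: "nat set"
  assumes "finite_abstract_complex K"
    and "filtration_order K v ord"
    and "is_cycle K p \<zeta>"
    and "\<not> null_homologous K p \<zeta>"
    and "S \<subseteq> essential_indices ord p"
    and "p_chain K (p + 1) c"
    and "\<zeta> = chain_add (chain_sum (essential_cycle ord) S) (chain_boundary K c)"
  shows "rv_class K p v \<zeta> = rv_chain v (essential_cycle ord (Max S))
    \<and> chain_sum (essential_cycle ord) S \<in> homology_class K p \<zeta>
    \<and> rv_chain v (chain_sum (essential_cycle ord) S) = rv_class K p v \<zeta>"
proof -
  note filt = assms(2) and cyc = assms(3) and nnull = assms(4) and Sess = assms(5)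
    and pc = assms(6) and zeta = assms(7)
  define N where "N = length ord"
  define ob where "ob = (!) ord"
  define D where "D = boundary_matrix ord"
  define R where "R = reduced_R ord"
  define V where "V = reduced_V ord"
  have dist: "distinct ord" and setK: "set ord = K"
    and ordr: "\<And>i j. i < N \<Longrightarrow> j < N \<Longrightarrow> rv_simplex v (ob i) < rv_simplex v (ob j) \<Longrightarrow> i < j"
    using filt unfolding filtration_order_def N_def ob_def by blast+
  have inj: "inj_on ob {..<N}" using dist unfolding ob_def N_def by (simp add: inj_on_nth)
  have oK: "ob ` {..<N} = K" using setK unfolding ob_def N_def by (auto simp: in_set_conv_nth)
  have finK: "finite K" using setK by auto
  have rvle: "\<And>k m. k \<le> m \<Longrightarrow> m < N \<Longrightarrow> rv_simplex v (ob k) \<le> rv_simplex v (ob m)"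
    using ordr by (meson le_less_trans linorder_not_less)
  have finD: "\<And>i. finite (D i)" unfolding D_def using bm_sub finite_subset by blast
  have "(R, V) = standard_reduction N D" unfolding R_def V_def reduced_R_def reduced_V_def N_def D_def by simp
  then have iv: "inv D N (R, V)" using std_red_inv[of D N, OF finD] by simp
  have iv': "(\<forall>i. finite (R i)) \<and> (\<forall>i. i \<in> V i \<and> V i \<subseteq> {..i})
    \<and> (\<forall>i. R i = chain_sum D (V i))
    \<and> (\<forall>a b. a < b \<and> b < N \<and> R a \<noteq> {} \<and> R b \<noteq> {} \<longrightarrow> low (R a) \<noteq> low (R b))"
    using iv unfolding inv_def fst_conv snd_conv .
  have Vi: "\<And>i. i \<in> V i \<and> V i \<subseteq> {..i}" using conjunct1[OF conjunct2[OF iv']] by simp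
  have RV: "R = (\<lambda>i. chain_sum D (V i))" using conjunct1[OF conjunct2[OF conjunct2[OF iv']]] by (simp add: fun_eq_iff)
  have finV: "\<And>i. finite (V i)" using Vi finite_subset by (meson finite_atMost)
  have essS: "\<And>i. i \<in> S \<Longrightarrow> i < N \<and> \<not> paired ord i"
    using Sess unfolding essential_indices_def N_def by blast
  have SN: "S \<subseteq> {..<N}" using essS by blast
  have finS: "finite S" using SN finite_subset by blast
  define SI where "SI = chain_sum V S"
  have ec: "essential_cycle ord = (\<lambda>i. ob ` V i)" unfolding essential_cycle_def ob_def V_def by (simp add: fun_eq_iff)
  have VN: "\<And>i. i \<in> S \<Longrightarrow> V i \<subseteq> {..<N}" using Vi essS by fastforce
  have sig: "chain_sum (essential_cycle ord) S = ob ` SI"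
    unfolding ec SI_def by (rule cs_image[OF inj VN])
  have bdimg: "\<And>c. p_chain K (p+1) c \<Longrightarrow> \<exists>C. C \<subseteq> {..<N} \<and> c = ob ` C \<and> chain_boundary K c = ob ` chain_sum D C"
  proof -
    fix c assume "p_chain K (p+1) c"
    then have cK: "c \<subseteq> K" by (simp add: p_chain_def)
    define C where "C = {k. k < N \<and> ob k \<in> c}"
    have CN: "C \<subseteq> {..<N}" unfolding C_def by blast
    have cC: "c = ob ` C" using cK oK unfolding C_def by blast
    have "chain_boundary K c = ob ` chain_sum D C"
      unfolding cC ob_def D_def using bd_image[of C ord] CN dist setK unfolding N_def by simp
    then show "\<exists>C. C \<subseteq> {..<N} \<and> c = ob ` C \<and> chain_boundary K c = ob ` chain_sum D C" using CN cC by blast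
  qed
  obtain C where C: "C \<subseteq> {..<N}" "c = ob ` C" "chain_boundary K c = ob ` chain_sum D C" using bdimg[OF pc] by blast
  have Snon: "S \<noteq> {}"
  proof
    assume "S = {}"
    then have "\<zeta> = chain_boundary K c" using zeta by (simp add: chain_add_def)
    then show False using nnull pc unfolding null_homologous_def by blast
  qed
  define m where "m = Max S"
  have mS: "m \<in> S" unfolding m_def using finS Snon by simp
  have mle: "\<And>i. i \<in> S \<Longrightarrow> i \<le> m" unfolding m_def using finS by simp
  have mN: "m < N" using essS mS by blast
  have mnp: "\<not> paired ord m" using essS mS by blast
  have SIm: "SI \<subseteq> {..m}"
  proof -
    have "\<Union>(V ` S) \<subseteq> {..m}" using Vi mle by fastforce
    then show ?thesis unfolding SI_def using cs_subset by (rule order_trans[rotated])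
  qed
  have mSI: "m \<in> SI"
  proof -
    have "{i\<in>S. m \<in> V i} = {m}"
    proof
      show "{i\<in>S. m \<in> V i} \<subseteq> {m}"
      proof
        fix i assume "i \<in> {i\<in>S. m \<in> V i}"
        then have "i \<in> S" "m \<in> V i" by auto
        then have "i \<le> m" "m \<le> i" using mle Vi[of i] by auto
        then show "i \<in> {m}" by simp
      qed
      show "{m} \<subseteq> {i\<in>S. m \<in> V i}" using mS Vi[of m] by simp
    qed
    then show ?thesis unfolding SI_def chain_sum_def by simp
  qed
  have finSI: "finite SI" using SIm finite_subset by blast
  define rvm where "rvm = rv_simplex v (ob m)"
  have rvSig: "rv_chain v (chain_sum (essential_cycle ord) S) = rvm"
    unfolding sig rvm_def
    by (rule rv_img[OF finSI mSI]) (use SIm rvle mN in auto)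
  have rvVm: "rv_chain v (essential_cycle ord (Max S)) = rvm"
    unfolding ec rvm_def m_def[symmetric]
    by (rule rv_img[OF finV]) (use Vi rvle mN in auto)
  have SigK: "ob ` SI \<subseteq> K" using SIm mN oK by force
  have zetaK: "\<zeta> \<subseteq> K" "\<And>\<sigma>. \<sigma> \<in> \<zeta> \<Longrightarrow> card \<sigma> = p + 1"
    using cyc unfolding is_cycle_def p_chain_def by blast+
  have bdcard: "\<And>c \<sigma>. p_chain K (p+1) c \<Longrightarrow> \<sigma> \<in> chain_boundary K c \<Longrightarrow> card \<sigma> = p + 1"
  proof -
    fix c \<sigma> assume pc': "p_chain K (p+1) c" and s: "\<sigma> \<in> chain_boundary K c"
    then have "odd (card {\<tau>\<in>c. is_facet \<sigma> \<tau>})" by (simp add: chain_boundary_def)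
    then have "{\<tau>\<in>c. is_facet \<sigma> \<tau>} \<noteq> {}" by (metis card.empty even_zero)
    then obtain \<tau> where "\<tau> \<in> c" "is_facet \<sigma> \<tau>" by blast
    then show "card \<sigma> = p + 1" using pc' by (simp add: is_facet_def p_chain_def)
  qed
  have Sig_eq: "ob ` SI = chain_add \<zeta> (chain_boundary K c)"
    using zeta sig by (auto simp: chain_add_def)
  have inclass: "chain_sum (essential_cycle ord) S \<in> homology_class K p \<zeta>"
  proof -
    have "p_chain K p (ob ` SI)"
      unfolding p_chain_def
    proof
      show "ob ` SI \<subseteq> K" by (rule SigK)
      show "\<forall>\<sigma>\<in>ob ` SI. card \<sigma> = p + 1"
      proof
        fix \<sigma> assume "\<sigma> \<in> ob ` SI"
        then have "\<sigma> \<in> \<zeta> \<or> \<sigma> \<in> chain_boundary K c" unfolding Sig_eq by (auto simp: chain_add_def)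
        then show "card \<sigma> = p + 1" using zetaK(2) bdcard[OF pc] by blast
      qed
    qed
    then show ?thesis unfolding sig homology_class_def using Sig_eq pc by blast
  qed
  have lower: "rvm \<le> rv_chain v \<xi>" if xi: "\<xi> \<in> homology_class K p \<zeta>" for \<xi>
  proof -
    obtain c' where c': "p_chain K (p+1) c'" "\<xi> = chain_add \<zeta> (chain_boundary K c')" and pxi: "p_chain K p \<xi>"
      using xi unfolding homology_class_def by blast
    obtain C' where C': "C' \<subseteq> {..<N}" "c' = ob ` C'" "chain_boundary K c' = ob ` chain_sum D C'" using bdimg[OF c'(1)] by blast
    have xiK: "\<xi> \<subseteq> K" using pxi by (simp add: p_chain_def)
    define X where "X = {k. k < N \<and> ob k \<in> \<xi>}"
    have XN: "X \<subseteq> {..<N}" unfolding X_def by blast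
    have xiX: "\<xi> = ob ` X" using xiK oK unfolding X_def by blast
    have csN: "\<And>A. chain_sum D A \<subseteq> {..<N}"
    proof -
      fix A
      have "\<Union>(D ` A) \<subseteq> {..<N}" using bm_sub unfolding D_def N_def by blast
      then show "chain_sum D A \<subseteq> {..<N}" using cs_subset by (rule order_trans[rotated])
    qed
    have SIN: "SI \<subseteq> {..<N}" using SIm mN by auto
    have addN: "\<And>A B. A \<subseteq> {..<N} \<Longrightarrow> B \<subseteq> {..<N} \<Longrightarrow> chain_add A B \<subseteq> {..<N}"
      by (auto simp: chain_add_def)
    have "\<xi> = chain_add (chain_add (ob ` SI) (ob ` chain_sum D C)) (ob ` chain_sum D C')"
      using c'(2) zeta sig C(3) C'(3) by simp
    also have "\<dots> = ob ` chain_add (chain_add SI (chain_sum D C)) (chain_sum D C')"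
      using img_add[OF inj SIN csN] img_add[OF inj addN[OF SIN csN] csN] by simp
    finally have "ob ` X = ob ` chain_add (chain_add SI (chain_sum D C)) (chain_sum D C')" using xiX by simp
    then have Xeq: "X = chain_add (chain_add SI (chain_sum D C)) (chain_sum D C')"
      using inj_on_image_eq_iff[OF inj XN addN[OF addN[OF SIN csN] csN]] by simp
    have finC: "finite C" "finite C'" using C(1) C'(1) finite_subset by blast+
    have "chain_add X SI = chain_add (chain_sum D C) (chain_sum D C')"
      unfolding Xeq by (auto simp: chain_add_def)
    also have "\<dots> = chain_sum D (chain_add C C')" using cs_add[OF finC, of D] by simp
    finally have XS: "chain_add X SI = chain_sum D (chain_add C C')" .
    obtain J where J: "J \<subseteq> {..<N}" "chain_sum V J = chain_add C C'"
      using expansion[of V "chain_add C C'" N] Vi addN[OF C(1) C'(1)] by blast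
    have finJ: "finite J" using J(1) finite_subset by blast
    have XR: "chain_add X SI = chain_sum R J"
      unfolding XS J(2)[symmetric] RV using cs_compose[of J V D, OF finJ finV] by simp
    have "\<exists>k\<in>X. m \<le> k"
    proof (rule ccontr)
      assume "\<not> (\<exists>k\<in>X. m \<le> k)"
      then have Xm: "\<And>k. k \<in> X \<Longrightarrow> k < m" by force
      have m1: "m \<in> chain_sum R J" unfolding XR[symmetric] chain_add_def using mSI Xm by blast
      have m2: "chain_sum R J \<subseteq> {..m}" unfolding XR[symmetric] chain_add_def using SIm Xm by force
      obtain j where "j < N" "R j \<noteq> {}" "low (R j) = m" using pivot[OF iv J(1) m1 m2] by blast
      then have "paired ord m" unfolding paired_def R_def N_def by blast
      then show False using mnp by blast
    qed
    then obtain k where k: "k \<in> X" "m \<le> k" by blast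
    have kN: "k < N" "ob k \<in> \<xi>" using k(1) unfolding X_def by blast+
    have "rvm \<le> rv_simplex v (ob k)" unfolding rvm_def using ordr[OF kN(1) mN] k(2) by force
    also have "\<dots> \<le> rv_chain v \<xi>" unfolding rv_chain_def
      using kN(2) finite_subset[OF xiK finK] by (intro Max_ge) auto
    finally show ?thesis .
  qed
  have finclass: "finite (homology_class K p \<zeta>)"
  proof (rule finite_subset)
    show "homology_class K p \<zeta> \<subseteq> Pow K" unfolding homology_class_def p_chain_def by blast
    show "finite (Pow K)" using finK by simp
  qed
  have rvc: "rv_class K p v \<zeta> = rvm"
    unfolding rv_class_def
  proof (rule Min_eqI)
    show "finite (rv_chain v ` homology_class K p \<zeta>)" using finclass by simp
    show "rvm \<le> y" if "y \<in> rv_chain v ` homology_class K p \<zeta>" for y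
    proof -
      from that obtain xi where "xi \<in> homology_class K p \<zeta>" "y = rv_chain v xi" by (rule imageE)
      then show ?thesis using lower by simp
    qed
    show "rvm \<in> rv_chain v ` homology_class K p \<zeta>" using inclass rvSig[symmetric] by (rule rev_image_eqI)
  qed
  show ?thesis using rvc rvVm inclass rvSig by argo
qed

end
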